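(* For any tensor $\mathcal{A}\in\mathbb{R}^{N_1\times N_2\times N_3}$ with $\mathcal{A}\neq\mathbf{0}$, $\xi(\mathcal{A})\,\mu(\mathcal{A})\ge 1$.
   Context: For $\mathcal{A}\in\mathbb{R}^{N_1\times N_2\times N_3}$ write $A^{(k)}=\mathcal{A}(:,:,k)$ for its frontal slices. $\mathrm{bcirc}(\mathcal{A})\in\mathbb{R}^{N_1N_3\times N_2N_3}$ is the block circulant matrix whose $(i,j)$ block is $A^{(((i-j)\bmod N_3)+1)}$; $\mathrm{unfold}$ stacks the frontal slices vertically, $\mathrm{fold}$ is its inverse, and the t-product is $\mathcal{A}*\mathcal{B}=\mathrm{fold}(\mathrm{bcirc}(\mathcal{A})\,\mathrm{unfold}(\mathcal{B}))$. The transpose $\mathcal{A}^\top$ transposes each frontal slice and reverses the order of slices $2,\dots,N_3$. The identity tensor has first frontal slice the identity and other slices zero; f-diagonal means every frontal slice is diagonal. Every $\mathcal{A}$ of tubal rank $R$ has a skinny t-SVD $\mathcal{A}=\mathcal{U}*\mathcal{S}*\mathcal{V}^\top$ with $\mathcal{U}\in\mathbb{R}^{N_1\times R\times N_3}$, $\mathcal{V}\in\mathbb{R}^{N_2\times R\times N_3}$, $\mathcal{U}^\top*\mathcal{U}=\mathcal{V}^\top*\mathcal{V}=\mathcal{I}$, $\mathcal{S}$ f-diagonal. Tensor spectral norm $\|\mathcal{A}\|=\|\mathrm{bcirc}(\mathcal{A})\|$; $\|\mathcal{A}\|_\infty$ is the maximum absolute entry. $T(\mathcal{A})=\{\mathcal{U}*\mathcal{Y}^\top+\mathcal{W}*\mathcal{V}^\top:\mathcal{Y}\in\mathbb{R}^{N_2\times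 R\times N_3},\mathcal{W}\in\mathbb{R}^{N_1\times R\times N_3}\}$; $\Omega(\mathcal{A})=\{\mathcal{N}:\mathrm{support}(\mathcal{N})\subseteq\mathrm{support}(\mathcal{A})\}$. $\xi(\mathcal{A})=\max_{\mathcal{N}\in T(\mathcal{A}),\|\mathcal{N}\|\le1}\|\mathcal{N}\|_\infty$, $\mu(\mathcal{A})=\max_{\mathcal{N}\in\Omega(\mathcal{A}),\|\mathcal{N}\|_\infty\le1}\|\mathcal{N}\|$. *)

theory Defs
  imports Complex_Main
begin

text \<open>Third-order real tensors of size N1 x N2 x N3 are functions nat => nat => nat => real
  (0-based indices) that vanish outside the index box. Matrices are nat => nat => real.\<close>

type_synonym tensor = "nat \<Rightarrow> nat \<Rightarrow> nat \<Rightarrow> real"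
type_synonym rmat = "nat \<Rightarrow> nat \<Rightarrow> real"

definition is_tensor :: "nat \<Rightarrow> nat \<Rightarrow> nat \<Rightarrow> tensor \<Rightarrow> bool" where
  "is_tensor N1 N2 N3 A \<longleftrightarrow> (\<forall>i j k. \<not> (i < N1 \<and> j < N2 \<and> k < N3) \<longrightarrow> A i j k = 0)"

definition tzero :: tensor where
  "tzero = (\<lambda>i j k. 0)"

definition tadd :: "tensor \<Rightarrow> tensor \<Rightarrow> tensor" where
  "tadd A B = (\<lambda>i j k. A i j k + B i j k)"

text \<open>Block circulant matrix: block (a,b) (0-based) is the frontal slice ((a - b) mod N3).\<close>
definition bcirc :: "nat \<Rightarrow> nat \<Rightarrow> nat \<Rightarrow> tensor \<Rightarrow> rmat" where
  "bcirc N1 N2 N3 A = (\<lambda>p q. if p < N1 * N3 \<and> q < N2 * N3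
      then A (p mod N1) (q mod N2) ((p div N1 + N3 - q div N2) mod N3) else 0)"

definition tunfold :: "nat \<Rightarrow> nat \<Rightarrow> nat \<Rightarrow> tensor \<Rightarrow> rmat" where
  "tunfold N1 N2 N3 B = (\<lambda>p j. if p < N1 * N3 \<and> j < N2 then B (p mod N1) j (p div N1) else 0)"

definition tfold :: "nat \<Rightarrow> nat \<Rightarrow> nat \<Rightarrow> rmat \<Rightarrow> tensor" where
  "tfold N1 N2 N3 M = (\<lambda>i j k. if i < N1 \<and> j < N2 \<and> k < N3 then M (k * N1 + i) j else 0)"

definition matmul :: "nat \<Rightarrow> rmat \<Rightarrow> rmat \<Rightarrow> rmat" where
  "matmul n M X = (\<lambda>p j. \<Sum>q<n. M p q * X q j)"

text \<open>t-product of A (N1 x N2 x N3) and B (N2 x N4 x N3).\<close>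
definition tprod :: "nat \<Rightarrow> nat \<Rightarrow> nat \<Rightarrow> nat \<Rightarrow> tensor \<Rightarrow> tensor \<Rightarrow> tensor" where
  "tprod N1 N2 N4 N3 A B = tfold N1 N4 N3 (matmul (N2 * N3) (bcirc N1 N2 N3 A) (tunfold N2 N4 N3 B))"

text \<open>Transpose of A (N1 x N2 x N3): transpose each slice, reverse slices 2..N3.\<close>
definition ttrans :: "nat \<Rightarrow> nat \<Rightarrow> nat \<Rightarrow> tensor \<Rightarrow> tensor" where
  "ttrans N1 N2 N3 A = (\<lambda>i j k. if i < N2 \<and> j < N1 \<and> k < N3 then A j i ((N3 - k) mod N3) else 0)"

definition tident :: "nat \<Rightarrow> nat \<Rightarrow> tensor" where
  "tident n N3 = (\<lambda>i j k. if i < n \<and> j = i \<and> k = 0 \<and> 0 < N3 then 1 else 0)"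

definition fdiag :: "tensor \<Rightarrow> bool" where
  "fdiag S \<longleftrightarrow> (\<forall>i j k. i \<noteq> j \<longrightarrow> S i j k = 0)"

definition opnorm :: "nat \<Rightarrow> nat \<Rightarrow> rmat \<Rightarrow> real" where
  "opnorm m n M = Sup {sqrt (\<Sum>p<m. (\<Sum>q<n. M p q * x q)\<^sup>2) | x. (\<Sum>q<n. (x q)\<^sup>2) \<le> 1}"

definition tnorm :: "nat \<Rightarrow> nat \<Rightarrow> nat \<Rightarrow> tensor \<Rightarrow> real" where
  "tnorm N1 N2 N3 A = opnorm (N1 * N3) (N2 * N3) (bcirc N1 N2 N3 A)"

definition inf_norm :: "nat \<Rightarrow> nat \<Rightarrow> nat \<Rightarrow> tensor \<Rightarrow> real" where
  "inf_norm N1 N2 N3 A = Max (insert 0 {\<bar>A i j k\<bar> | i j k. i < N1 \<and> j < N2 \<and> k < N3})"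

definition dft_slice :: "nat \<Rightarrow> tensor \<Rightarrow> nat \<Rightarrow> nat \<Rightarrow> nat \<Rightarrow> complex" where
  "dft_slice N3 A k = (\<lambda>i j. \<Sum>m<N3. complex_of_real (A i j m) * cis (- 2 * pi * real k * real m / real N3))"

definition cmat_rank :: "nat \<Rightarrow> nat \<Rightarrow> (nat \<Rightarrow> nat \<Rightarrow> complex) \<Rightarrow> nat" where
  "cmat_rank m n M = Max {card C | C. C \<subseteq> {..<n} \<and>
      (\<forall>c. (\<forall>i<m. (\<Sum>j\<in>C. c j * M i j) = 0) \<longrightarrow> (\<forall>j\<in>C. c j = 0))}"

definition tubal_rank :: "nat \<Rightarrow> nat \<Rightarrow> nat \<Rightarrow> tensor \<Rightarrow> nat" where
  "tubal_rank N1 N2 N3 A = Max (insert 0 ((\<lambda>k. cmat_rank N1 N2 (dft_slice N3 A k)) ` {..<N3}))"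

definition skinny_tsvd :: "nat \<Rightarrow> nat \<Rightarrow> nat \<Rightarrow> nat \<Rightarrow> tensor \<Rightarrow> tensor \<Rightarrow> tensor \<Rightarrow> tensor \<Rightarrow> bool" where
  "skinny_tsvd N1 N2 N3 R A U S V \<longleftrightarrow>
     is_tensor N1 R N3 U \<and> is_tensor R R N3 S \<and> is_tensor N2 R N3 V \<and>
     tprod R N1 R N3 (ttrans N1 R N3 U) U = tident R N3 \<and>
     tprod R N2 R N3 (ttrans N2 R N3 V) V = tident R N3 \<and>
     fdiag S \<and>
     A = tprod N1 R N2 N3 (tprod N1 R R N3 U S) (ttrans N2 R N3 V)"

definition tangent_space :: "nat \<Rightarrow> nat \<Rightarrow> nat \<Rightarrow> nat \<Rightarrow> tensor \<Rightarrow> tensor \<Rightarrow> tensor set" where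
  "tangent_space N1 N2 N3 R U V = {tadd (tprod N1 R N2 N3 U (ttrans N2 R N3 Y)) (tprod N1 R N2 N3 W (ttrans N2 R N3 V))
      | Y W. is_tensor N2 R N3 Y \<and> is_tensor N1 R N3 W}"

definition tsupport :: "tensor \<Rightarrow> (nat \<times> nat \<times> nat) set" where
  "tsupport A = {(i, j, k). A i j k \<noteq> 0}"

definition support_space :: "nat \<Rightarrow> nat \<Rightarrow> nat \<Rightarrow> tensor \<Rightarrow> tensor set" where
  "support_space N1 N2 N3 A = {N. is_tensor N1 N2 N3 N \<and> tsupport N \<subseteq> tsupport A}"

definition xi :: "nat \<Rightarrow> nat \<Rightarrow> nat \<Rightarrow> nat \<Rightarrow> tensor \<Rightarrow> tensor \<Rightarrow> real" where
  "xi N1 N2 N3 R U V = Sup {inf_norm N1 N2 N3 N | N. N \<in> tangent_space N1 N2 N3 R U V \<and> tnorm N1 N2 N3 N \<le> 1}"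

definition mu :: "nat \<Rightarrow> nat \<Rightarrow> nat \<Rightarrow> tensor \<Rightarrow> real" where
  "mu N1 N2 N3 A = Sup {tnorm N1 N2 N3 N | N. N \<in> support_space N1 N2 N3 A \<and> inf_norm N1 N2 N3 N \<le> 1}"

end

theory Submission
  imports Defs
begin

definition sc :: "real \<Rightarrow> tensor \<Rightarrow> tensor" where
  "sc c A = (\<lambda>i j k. c * A i j k)"

lemma opnorm_elem_bdd:
  fixes m n :: nat
  assumes "(\<Sum>q<n. (x q)\<^sup>2) \<le> 1"
  shows "sqrt (\<Sum>p<m. (\<Sum>q<n. M p q * x q)\<^sup>2) \<le> sqrt (\<Sum>p<m. (\<Sum>q<n. \<bar>M p q\<bar>)\<^sup>2)"
proof -
  have xq: "\<bar>x q\<bar> \<le> 1" if "q < n" for q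
  proof -
    have "(x q)\<^sup>2 \<le> (\<Sum>q<n. (x q)\<^sup>2)"
      by (rule member_le_sum) (use that in auto)
    then have "(x q)\<^sup>2 \<le> 1" using assms by linarith
    then show ?thesis by (simp add: abs_square_le_1)
  qed
  have "(\<Sum>q<n. M p q * x q)\<^sup>2 \<le> (\<Sum>q<n. \<bar>M p q\<bar>)\<^sup>2" for p
  proof -
    have "\<bar>\<Sum>q<n. M p q * x q\<bar> \<le> (\<Sum>q<n. \<bar>M p q * x q\<bar>)" by (rule sum_abs)
    also have "\<dots> \<le> (\<Sum>q<n. \<bar>M p q\<bar>)"
      by (rule sum_mono) (use xq in \<open>auto simp: abs_mult intro: mult_left_le\<close>)
    finally have "\<bar>\<Sum>q<n. M p q * x q\<bar> \<le> (\<Sum>q<n. \<bar>M p q\<bar>)" .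
    then have "\<bar>\<Sum>q<n. M p q * x q\<bar>\<^sup>2 \<le> (\<Sum>q<n. \<bar>M p q\<bar>)\<^sup>2"
      by (rule power_mono) simp
    then show ?thesis by simp
  qed
  then show ?thesis by (intro real_sqrt_le_mono sum_mono) auto
qed

lemma opnorm_bdd: "bdd_above {sqrt (\<Sum>p<(m::nat). (\<Sum>q<n. (M::rmat) p q * x q)\<^sup>2) | x. (\<Sum>q<(n::nat). (x q)\<^sup>2) \<le> 1}"
  unfolding bdd_above_def
  by (rule exI[of _ "sqrt (\<Sum>p<m. (\<Sum>q<n. \<bar>M p q\<bar>)\<^sup>2)"]) (auto intro: opnorm_elem_bdd)

lemma opnorm_nonempty: "{sqrt (\<Sum>p<(m::nat). (\<Sum>q<n. (M::rmat) p q * x q)\<^sup>2) | x. (\<Sum>q<(n::nat). (x q)\<^sup>2) \<le> 1} \<noteq> {}"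
proof -
  have "sqrt (\<Sum>p<m. (\<Sum>q<n. M p q * (\<lambda>_. 0::real) q)\<^sup>2) \<in> {sqrt (\<Sum>p<m. (\<Sum>q<n. M p q * x q)\<^sup>2) | x. (\<Sum>q<n. (x q)\<^sup>2) \<le> 1}"
    by (intro CollectI exI[of _ "\<lambda>_. 0::real"]) simp
  then show ?thesis by blast
qed

lemma opnorm_entry:
  fixes m n :: nat
  assumes "p < m" "q < n"
  shows "\<bar>M p q\<bar> \<le> opnorm m n M"
proof -
  define x where "x = (\<lambda>r. if r = q then 1 else (0::real))"
  have "(x r)\<^sup>2 = x r" for r by (simp add: x_def)
  then have s1: "(\<Sum>r<n. (x r)\<^sup>2) = 1"
    using assms(2) by (simp add: x_def)
  have s2: "(\<Sum>r<n. M p' r * x r) = M p' q" for p'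
    using assms(2) by (simp add: x_def if_distrib sum.delta cong: if_cong)
  have "\<bar>M p q\<bar> = sqrt ((M p q)\<^sup>2)" by simp
  also have "\<dots> \<le> sqrt (\<Sum>p'<m. (M p' q)\<^sup>2)"
    by (intro real_sqrt_le_mono member_le_sum) (use assms in auto)
  also have "\<dots> = sqrt (\<Sum>p'<m. (\<Sum>r<n. M p' r * x r)\<^sup>2)" by (simp add: s2)
  also have "\<dots> \<le> opnorm m n M"
    unfolding opnorm_def by (rule cSup_upper[OF _ opnorm_bdd]) (use s1 in auto)
  finally show ?thesis .
qed

lemma opnorm_scale:
  fixes m n :: nat
  assumes "c \<ge> 0"
  shows "opnorm m n (\<lambda>p q. c * M p q) \<le> c * opnorm m n M"
  unfolding opnorm_def
proof (rule cSup_least[OF opnorm_nonempty])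
  fix y assume "y \<in> {sqrt (\<Sum>p<m. (\<Sum>q<n. c * M p q * x q)\<^sup>2) | x. (\<Sum>q<n. (x q)\<^sup>2) \<le> 1}"
  then obtain x where x: "(\<Sum>q<n. (x q)\<^sup>2) \<le> 1" and y: "y = sqrt (\<Sum>p<m. (\<Sum>q<n. c * M p q * x q)\<^sup>2)"
    by blast
  have "y = sqrt (c\<^sup>2 * (\<Sum>p<m. (\<Sum>q<n. M p q * x q)\<^sup>2))"
    unfolding y by (simp add: sum_distrib_left[symmetric] mult.assoc power_mult_distrib)
  also have "\<dots> = c * sqrt (\<Sum>p<m. (\<Sum>q<n. M p q * x q)\<^sup>2)"
    using assms by (simp add: real_sqrt_mult)
  also have "\<dots> \<le> c * Sup {sqrt (\<Sum>p<m. (\<Sum>q<n. M p q * x q)\<^sup>2) | x. (\<Sum>q<n. (x q)\<^sup>2) \<le> 1}"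
    by (intro mult_left_mono cSup_upper[OF _ opnorm_bdd]) (use x assms in auto)
  finally show "y \<le> c * Sup {sqrt (\<Sum>p<m. (\<Sum>q<n. M p q * x q)\<^sup>2) | x. (\<Sum>q<n. (x q)\<^sup>2) \<le> 1}" .
qed

lemma opnorm_bound:
  fixes m n :: nat
  assumes "\<And>p q. p < m \<Longrightarrow> q < n \<Longrightarrow> \<bar>M p q\<bar> \<le> B"
  shows "opnorm m n M \<le> sqrt (\<Sum>p<m. (real n * B)\<^sup>2)"
  unfolding opnorm_def
proof (rule cSup_least[OF opnorm_nonempty])
  fix y assume "y \<in> {sqrt (\<Sum>p<m. (\<Sum>q<n. M p q * x q)\<^sup>2) | x. (\<Sum>q<n. (x q)\<^sup>2) \<le> 1}"
  then obtain x where x: "(\<Sum>q<n. (x q)\<^sup>2) \<le> 1" and y: "y = sqrt (\<Sum>p<m. (\<Sum>q<n. M p q * x q)\<^sup>2)"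
    by blast
  have "y \<le> sqrt (\<Sum>p<m. (\<Sum>q<n. \<bar>M p q\<bar>)\<^sup>2)" using y opnorm_elem_bdd[OF x] by simp
  also have "\<dots> \<le> sqrt (\<Sum>p<m. (real n * B)\<^sup>2)"
  proof (intro real_sqrt_le_mono sum_mono power_mono)
    fix p assume "p \<in> {..<m}"
    then have "(\<Sum>q<n. \<bar>M p q\<bar>) \<le> (\<Sum>q<n. B)" by (intro sum_mono assms) auto
    then show "(\<Sum>q<n. \<bar>M p q\<bar>) \<le> real n * B" by simp
    show "0 \<le> (\<Sum>q<n. \<bar>M p q\<bar>)" by (simp add: sum_nonneg)
  qed
  finally show "y \<le> sqrt (\<Sum>p<m. (real n * B)\<^sup>2)" .
qed

lemma inf_set_eq:
  fixes A :: tensor and N1 N2 N3 :: nat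
  shows "{\<bar>A i j k\<bar> | i j k. i < N1 \<and> j < N2 \<and> k < N3}
   = (\<lambda>(i,j,k). \<bar>A i j k\<bar>) ` ({..<N1} \<times> {..<N2} \<times> {..<N3})"
  by (auto simp: image_iff; blast)

lemma inf_fin:
  fixes A :: tensor and N1 N2 N3 :: nat
  shows "finite (insert 0 {\<bar>A i j k\<bar> | i j k. i < N1 \<and> j < N2 \<and> k < N3})"
  unfolding inf_set_eq by (intro finite.insertI finite_imageI finite_cartesian_product) auto

lemma inf_entry: "i < N1 \<Longrightarrow> j < N2 \<Longrightarrow> k < N3 \<Longrightarrow> \<bar>A i j k\<bar> \<le> inf_norm N1 N2 N3 A"
  unfolding inf_norm_def by (rule Max_ge[OF inf_fin]) blast

lemma inf_nonneg: "0 \<le> inf_norm N1 N2 N3 A"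
  unfolding inf_norm_def by (rule Max_ge[OF inf_fin]) blast

lemma inf_le:
  assumes "B \<ge> 0" "\<And>i j k. i < N1 \<Longrightarrow> j < N2 \<Longrightarrow> k < N3 \<Longrightarrow> \<bar>A i j k\<bar> \<le> B"
  shows "inf_norm N1 N2 N3 A \<le> B"
  unfolding inf_norm_def using assms by (subst Max_le_iff[OF inf_fin]) auto

lemma inf_attained:
  "inf_norm N1 N2 N3 A = 0 \<or> (\<exists>i j k. i < N1 \<and> j < N2 \<and> k < N3 \<and> inf_norm N1 N2 N3 A = \<bar>A i j k\<bar>)"
proof -
  have "inf_norm N1 N2 N3 A \<in> insert 0 {\<bar>A i j k\<bar> | i j k. i < N1 \<and> j < N2 \<and> k < N3}"
    unfolding inf_norm_def by (rule Max_in[OF inf_fin]) simp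
  then show ?thesis by auto
qed

lemma tnorm_entry:
  assumes "i < N1" "j < N2" "k < N3"
  shows "\<bar>N i j k\<bar> \<le> tnorm N1 N2 N3 N"
proof -
  have p: "k * N1 + i < N1 * N3"
  proof -
    have "k * N1 + i < k * N1 + N1" using assms by simp
    also have "\<dots> = (k + 1) * N1" by simp
    also have "\<dots> \<le> N3 * N1" using assms by (intro mult_right_mono) auto
    finally show ?thesis by (simp add: mult.commute)
  qed
  have "N2 \<le> N2 * N3" using assms(3) by simp
  then have q: "j < N2 * N3" using assms(2) by linarith
  have "bcirc N1 N2 N3 N (k * N1 + i) j = N i j k"
    unfolding bcirc_def using p q assms by simp
  then show ?thesis unfolding tnorm_def using opnorm_entry[OF p q, of "bcirc N1 N2 N3 N"] by simp
qed

lemma bcirc_sc: "bcirc N1 N2 N3 (sc c A) = (\<lambda>p q. c * bcirc N1 N2 N3 A p q)"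
  unfolding bcirc_def sc_def by (simp add: fun_eq_iff)

lemma tnorm_sc: "c \<ge> 0 \<Longrightarrow> tnorm N1 N2 N3 (sc c A) \<le> c * tnorm N1 N2 N3 A"
  unfolding tnorm_def bcirc_sc by (rule opnorm_scale)

lemma tnorm_sc_ge:
  assumes "c > 0" shows "c * tnorm N1 N2 N3 A \<le> tnorm N1 N2 N3 (sc c A)"
proof -
  have "sc (1/c) (sc c A) = A" using assms unfolding sc_def by auto
  then have "tnorm N1 N2 N3 A \<le> (1/c) * tnorm N1 N2 N3 (sc c A)"
    using tnorm_sc[of "1/c" N1 N2 N3 "sc c A"] assms by simp
  then show ?thesis using assms by (simp add: field_simps)
qed

lemma tprod_sc: "tprod N1 N2 N4 N3 (sc c W) X = sc c (tprod N1 N2 N4 N3 W X)"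
  unfolding tprod_def bcirc_sc unfolding tfold_def matmul_def sc_def
  by (auto simp: sum_distrib_left mult.assoc intro!: ext)

lemma tprod_zero: "tprod N1 N2 N4 N3 W (ttrans N4 N2 N3 tzero) = tzero"
  unfolding tprod_def ttrans_def tzero_def tunfold_def tfold_def matmul_def
  by (auto intro!: ext)

lemma tfold_is_tensor: "is_tensor N1 N2 N3 (tfold N1 N2 N3 M)"
  unfolding is_tensor_def tfold_def by auto

theorem corollary1:
  fixes N1 N2 N3 R :: nat and A U S V :: tensor
  assumes "is_tensor N1 N2 N3 A"
    and "A \<noteq> tzero"
    and "R = tubal_rank N1 N2 N3 A"
    and "skinny_tsvd N1 N2 N3 R A U S V"
  shows "xi N1 N2 N3 R U V * mu N1 N2 N3 A \<ge> 1"
proof -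
  obtain i j k where ijk: "i < N1" "j < N2" "k < N3" "A i j k \<noteq> 0"
    using assms(1,2) unfolding is_tensor_def tzero_def by (meson ext)
  define a where "a = tnorm N1 N2 N3 A"
  define m where "m = inf_norm N1 N2 N3 A"
  have a0: "a > 0" using tnorm_entry[OF ijk(1-3), of A] ijk(4) unfolding a_def by linarith
  have m0: "m > 0" using inf_entry[OF ijk(1-3), of A] ijk(4) unfolding m_def by linarith
  have Aeq: "A = tprod N1 R N2 N3 (tprod N1 R R N3 U S) (ttrans N2 R N3 V)"
    using assms(4) unfolding skinny_tsvd_def by blast
  define Xs where "Xs = {inf_norm N1 N2 N3 N | N. N \<in> tangent_space N1 N2 N3 R U V \<and> tnorm N1 N2 N3 N \<le> 1}"
  have Xbdd: "bdd_above Xs"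
    unfolding Xs_def bdd_above_def
  proof (intro exI[of _ 1] ballI)
    fix y assume "y \<in> {inf_norm N1 N2 N3 N | N. N \<in> tangent_space N1 N2 N3 R U V \<and> tnorm N1 N2 N3 N \<le> 1}"
    then obtain N where y: "y = inf_norm N1 N2 N3 N" and "tnorm N1 N2 N3 N \<le> 1" by blast
    then show "y \<le> 1" using tnorm_entry[of _ N1 _ N2 _ N3 N]
      by (auto intro!: inf_le order_trans[OF tnorm_entry])
  qed
  have inT: "sc (1/a) A \<in> tangent_space N1 N2 N3 R U V"
  proof -
    have "sc (1/a) A = tadd (tprod N1 R N2 N3 U (ttrans N2 R N3 tzero))
                (tprod N1 R N2 N3 (sc (1/a) (tprod N1 R R N3 U S)) (ttrans N2 R N3 V))"
      unfolding tprod_zero tprod_sc Aeq[symmetric] by (simp add: tadd_def tzero_def)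
    moreover have "is_tensor N2 R N3 tzero" unfolding is_tensor_def tzero_def by simp
    moreover have "is_tensor N1 R N3 (sc (1/a) (tprod N1 R R N3 U S))"
      using tfold_is_tensor[of N1 R N3] unfolding is_tensor_def sc_def tprod_def by simp
    ultimately show ?thesis unfolding tangent_space_def by blast
  qed
  have "tnorm N1 N2 N3 (sc (1/a) A) \<le> 1"
    using tnorm_sc[of "1/a" N1 N2 N3 A] a0 unfolding a_def by simp
  then have "inf_norm N1 N2 N3 (sc (1/a) A) \<in> Xs" using inT unfolding Xs_def by blast
  then have x1: "inf_norm N1 N2 N3 (sc (1/a) A) \<le> xi N1 N2 N3 R U V"
    unfolding xi_def Xs_def[symmetric] by (rule cSup_upper[OF _ Xbdd])
  have "(1/a) * m \<le> inf_norm N1 N2 N3 (sc (1/a) A)"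
    using inf_attained[of N1 N2 N3 A] a0
  proof (elim disjE exE conjE)
    assume "inf_norm N1 N2 N3 A = 0" then show ?thesis using inf_nonneg unfolding m_def by simp
  next
    fix i j k assume h: "i < N1" "j < N2" "k < N3" "inf_norm N1 N2 N3 A = \<bar>A i j k\<bar>"
    have "(1/a) * m = \<bar>sc (1/a) A i j k\<bar>" using h a0 unfolding m_def sc_def by (simp add: abs_mult)
    then show ?thesis using inf_entry[OF h(1-3)] by simp
  qed
  with x1 have xa: "m / a \<le> xi N1 N2 N3 R U V" by simp
  define Ms where "Ms = {tnorm N1 N2 N3 N | N. N \<in> support_space N1 N2 N3 A \<and> inf_norm N1 N2 N3 N \<le> 1}"
  have Mbdd: "bdd_above Ms"
    unfolding Ms_def bdd_above_def
  proof (intro exI[of _ "sqrt (\<Sum>p<N1*N3. (real (N2*N3) * 1)\<^sup>2)"] ballI)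
    fix y assume "y \<in> {tnorm N1 N2 N3 N | N. N \<in> support_space N1 N2 N3 A \<and> inf_norm N1 N2 N3 N \<le> 1}"
    then obtain N where y: "y = tnorm N1 N2 N3 N" and h: "inf_norm N1 N2 N3 N \<le> 1" by blast
    have "\<bar>bcirc N1 N2 N3 N p q\<bar> \<le> 1" for p q
    proof (cases "p < N1 * N3 \<and> q < N2 * N3")
      case True
      then have "N3 > 0" by (cases N3) auto
      then have "p div N1 < N3" using True by (simp add: less_mult_imp_div_less mult.commute)
      have "p mod N1 < N1" using True by (cases N1) auto
      moreover have "q mod N2 < N2" using True by (cases N2) auto
      moreover have "(p div N1 + N3 - q div N2) mod N3 < N3" using \<open>N3 > 0\<close> by simp
      ultimately show ?thesis using True h inf_entry[of "p mod N1" N1 "q mod N2" N2 _ N3 N]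
        unfolding bcirc_def by force
    next
      case False
      then show ?thesis unfolding bcirc_def by (simp only: if_False)
    qed
    then show "y \<le> sqrt (\<Sum>p<N1*N3. (real (N2*N3) * 1)\<^sup>2)"
      unfolding y tnorm_def by (intro opnorm_bound) auto
  qed
  have inO: "sc (1/m) A \<in> support_space N1 N2 N3 A"
    using assms(1) m0 unfolding support_space_def is_tensor_def sc_def tsupport_def by auto
  have "inf_norm N1 N2 N3 (sc (1/m) A) \<le> 1"
  proof (rule inf_le)
    fix i j k assume h: "i < N1" "j < N2" "k < N3"
    have "\<bar>sc (1/m) A i j k\<bar> = \<bar>A i j k\<bar> / m" using m0 unfolding sc_def by (simp add: abs_mult)
    also have "\<dots> \<le> 1" using inf_entry[OF h, of A] m0 unfolding m_def by simp
    finally show "\<bar>sc (1/m) A i j k\<bar> \<le> 1" .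
  qed simp
  then have "tnorm N1 N2 N3 (sc (1/m) A) \<in> Ms" using inO unfolding Ms_def by blast
  then have "tnorm N1 N2 N3 (sc (1/m) A) \<le> mu N1 N2 N3 A"
    unfolding mu_def Ms_def[symmetric] by (rule cSup_upper[OF _ Mbdd])
  moreover have "(1/m) * a \<le> tnorm N1 N2 N3 (sc (1/m) A)"
    using tnorm_sc_ge[of "1/m" N1 N2 N3 A] m0 unfolding a_def by simp
  ultimately have ma: "a / m \<le> mu N1 N2 N3 A" by simp
  have "1 = (m / a) * (a / m)" using a0 m0 by simp
  also have "\<dots> \<le> xi N1 N2 N3 R U V * mu N1 N2 N3 A"
  proof (rule mult_mono[OF xa ma])
    have "0 \<le> m / a" using a0 m0 by simp
    then show "0 \<le> xi N1 N2 N3 R U V" using xa by linarith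
    show "0 \<le> a / m" using a0 m0 by simp
  qed
  finally show ?thesis .
qed

end
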